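(* Let $(T,\sigma,w)$ be an alternatingly weighted tree with vertices $v_1,\dots,v_g$ (in an arbitrary order). Then the matrix $\mathrm{Mat}(T)$ is effective, i.e. all nonzero terms $\mathrm{sgn}(\tau)\,m_{1\tau(1)}\cdots m_{g\tau(g)}$ ($\tau\in S_g$) in the expansion $\det(\mathrm{Mat}(T))=\sum_{\tau\in S_g}\mathrm{sgn}(\tau)m_{1\tau(1)}\cdots m_{g\tau(g)}$ have the same sign.
   Context: An alternatingly weighted tree $(T,\sigma,w)$ consists of: a finite graph $T$ that is a disjoint union of trees, with vertex set $V(T)$; a map $\sigma:V(T)\to\{\pm1\}$ such that $\sigma(v_1)=-\sigma(v_2)$ whenever $v_1,v_2$ are joined by an edge; and a map $w:V(T)\to\{0,1,\infty\}$. For each vertex $v_i$ write $w(v_i)=a(i)/b(i)$ with $(a(i),b(i))=(1,1)$ if $w(v_i)=1$, $(0,1)$ if $w(v_i)=0$, and $(1,0)$ if $w(v_i)=\infty$. The $g\times g$ matrix $\mathrm{Mat}(T)=(m_{ij})$ has diagonal entries $m_{ii}=\sigma(v_i)a(i)$; for each edge joining $v_i$ and $v_j$ with $i<j$, $m_{ij}=b(i)$ and $m_{ji}=b(j)$; all other entries are $0$. A square matrix is called effective if all nonzero terms of its determinant expansion have constant sign (all positive or all negative). *)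

theory Defs
  imports Main "HOL-Combinatorics.Permutations"
begin

datatype weight = WZero | WOne | WInf

fun wa :: "weight \<Rightarrow> int" where
  "wa WZero = 0" | "wa WOne = 1" | "wa WInf = 1"

fun wb :: "weight \<Rightarrow> int" where
  "wb WZero = 1" | "wb WOne = 1" | "wb WInf = 0"

definition has_cycle :: "(nat \<Rightarrow> nat \<Rightarrow> bool) \<Rightarrow> bool" where
  "has_cycle E \<longleftrightarrow> (\<exists>xs. length xs \<ge> 3 \<and> distinct xs \<and>
      (\<forall>k. Suc k < length xs \<longrightarrow> E (xs ! k) (xs ! Suc k)) \<and> E (last xs) (hd xs))"

definition forest :: "nat \<Rightarrow> (nat \<Rightarrow> nat \<Rightarrow> bool) \<Rightarrow> bool" where
  "forest g E \<longleftrightarrow> (\<forall>i j. E i j \<longrightarrow> i < g \<and> j < g) \<and> (\<forall>i j. E i j \<longrightarrow> E j i)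
      \<and> (\<forall>i. \<not> E i i) \<and> \<not> has_cycle E"

definition alt_weighted_tree ::
  "nat \<Rightarrow> (nat \<Rightarrow> nat \<Rightarrow> bool) \<Rightarrow> (nat \<Rightarrow> int) \<Rightarrow> (nat \<Rightarrow> weight) \<Rightarrow> bool" where
  "alt_weighted_tree g E \<sigma> w \<longleftrightarrow> forest g E \<and> (\<forall>i<g. \<sigma> i = 1 \<or> \<sigma> i = -1)
      \<and> (\<forall>i j. E i j \<longrightarrow> \<sigma> i = - \<sigma> j)"

text \<open>The matrix Mat(T), indexed by 0..g-1 (entries outside are irrelevant).\<close>
definition Mat :: "(nat \<Rightarrow> nat \<Rightarrow> bool) \<Rightarrow> (nat \<Rightarrow> int) \<Rightarrow> (nat \<Rightarrow> weight) \<Rightarrow> nat \<Rightarrow> nat \<Rightarrow> int" where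
  "Mat E \<sigma> w i j = (if i = j then \<sigma> i * wa (w i)
      else if i < j \<and> E i j then wb (w i)
      else if j < i \<and> E j i then wb (w i)
      else 0)"

definition det_term :: "nat \<Rightarrow> (nat \<Rightarrow> nat \<Rightarrow> int) \<Rightarrow> (nat \<Rightarrow> nat) \<Rightarrow> int" where
  "det_term g M \<tau> = sign \<tau> * (\<Prod>i<g. M i (\<tau> i))"

definition effective :: "nat \<Rightarrow> (nat \<Rightarrow> nat \<Rightarrow> int) \<Rightarrow> bool" where
  "effective g M \<longleftrightarrow> (\<forall>\<tau> \<tau>'. \<tau> permutes {..<g} \<longrightarrow> \<tau>' permutes {..<g} \<longrightarrow>
      det_term g M \<tau> \<noteq> 0 \<longrightarrow> det_term g M \<tau>' \<noteq> 0 \<longrightarrow>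
      sgn (det_term g M \<tau>) = sgn (det_term g M \<tau>'))"

end

theory Submission
  imports Defs "HOL-Combinatorics.Cycles"
begin

lemma involution_lemma:
  assumes perm: "\<tau> permutes {..<g}" and fo: "forest g E"
    and ed: "\<forall>i<g. \<tau> i = i \<or> E i (\<tau> i)"
  shows "\<tau> (\<tau> i) = i"
proof (cases "i < g \<and> \<tau> i \<noteq> i")
  case False
  then show ?thesis
    using permutes_not_in[OF perm, of i] by auto
next
  case True
  hence ig: "i < g" and ti: "\<tau> i \<noteq> i" by auto
  show ?thesis
  proof (rule ccontr)
    assume tti: "\<tau> (\<tau> i) \<noteq> i"
    have injt: "inj \<tau>" using permutes_inj[OF perm] .
    have pt: "permutation \<tau>" using permutes_imp_permutation[OF _ perm] by simp
    obtain n where n: "(\<tau> ^^ n) = id" "n > 0" using permutation_is_nilpotent[OF pt] by blast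
    define n0 where "n0 = (LEAST m. m > 0 \<and> (\<tau> ^^ m) i = i)"
    have ex: "n > 0 \<and> (\<tau> ^^ n) i = i" using n by simp
    have n0: "n0 > 0" "(\<tau> ^^ n0) i = i"
      using LeastI[of "\<lambda>m. m > 0 \<and> (\<tau> ^^ m) i = i", OF ex] unfolding n0_def by auto
    have minl: "\<And>m. 0 < m \<Longrightarrow> m < n0 \<Longrightarrow> (\<tau> ^^ m) i \<noteq> i"
      unfolding n0_def using not_less_Least by blast
    have dist: "\<And>a b. a < b \<Longrightarrow> b < n0 \<Longrightarrow> (\<tau> ^^ a) i \<noteq> (\<tau> ^^ b) i"
    proof
      fix a b assume ab: "a < b" "b < n0" "(\<tau> ^^ a) i = (\<tau> ^^ b) i"
      hence "(\<tau> ^^ (b - a)) i = i" using funpow_diff[OF injt, of a b i] by simp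
      thus False using minl[of "b - a"] ab by auto
    qed
    have n01: "n0 \<noteq> 1" using n0 ti by auto
    have n02: "n0 \<noteq> 2" using n0 tti by (auto simp: numeral_2_eq_2)
    have n03: "n0 \<ge> 3" using n0 n01 n02 by linarith
    define xs where "xs = map (\<lambda>k. (\<tau> ^^ k) i) [0..<n0]"
    have inG: "\<And>k. (\<tau> ^^ k) i < g"
      using permutes_in_image[OF permutes_funpow[OF perm]] ig by auto
    have adj: "\<And>k. Suc k \<le> n0 \<Longrightarrow> E ((\<tau> ^^ k) i) ((\<tau> ^^ Suc k) i)"
    proof -
      fix k assume k: "Suc k \<le> n0"
      have ne: "(\<tau> ^^ Suc k) i \<noteq> (\<tau> ^^ k) i"
      proof (cases "Suc k = n0")
        case True
        have a: "(\<tau> ^^ Suc k) i = i" using True n0(2) by simp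
        have "0 < k" using True n01 by (cases k) auto
        hence "(\<tau> ^^ k) i \<noteq> i" using minl[of k] True by simp
        thus ?thesis using a by simp
      next
        case False
        then show ?thesis using dist[of k "Suc k"] k by auto
      qed
      have eq: "\<tau> ((\<tau> ^^ k) i) = (\<tau> ^^ Suc k) i" by simp
      have "\<tau> ((\<tau> ^^ k) i) = (\<tau> ^^ k) i \<or> E ((\<tau> ^^ k) i) (\<tau> ((\<tau> ^^ k) i))"
        using ed inG[of k] by blast
      thus "E ((\<tau> ^^ k) i) ((\<tau> ^^ Suc k) i)" using ne unfolding eq by blast
    qed
    have "has_cycle E"
      unfolding has_cycle_def
    proof (intro exI conjI allI impI)
      show "3 \<le> length xs" using n03 by (simp add: xs_def)
      show "distinct xs" unfolding xs_def distinct_conv_nth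
        using dist by (auto simp: nat_neq_iff)
      fix k assume "Suc k < length xs"
      thus "E (xs ! k) (xs ! Suc k)" using adj by (simp add: xs_def)
    next
      have "last xs = (\<tau> ^^ (n0 - 1)) i" using n0 by (simp add: xs_def last_map)
      moreover have "hd xs = i" using n0 by (simp add: xs_def hd_map)
      moreover have "Suc (n0 - 1) = n0" using n0 by simp
      moreover have "E ((\<tau> ^^ (n0 - 1)) i) ((\<tau> ^^ Suc (n0 - 1)) i)" using adj[of "n0 - 1"] n0 by simp
      ultimately show "E (last xs) (hd xs)" using n0(2) by simp
    qed
    thus False using fo unfolding forest_def by blast
  qed
qed

lemma sign_prod_lemma:
  fixes g :: nat and \<tau> :: "nat \<Rightarrow> nat"
  assumes "\<tau> permutes {..<g}" "\<forall>i. \<tau> (\<tau> i) = i"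
    "\<forall>i<g. \<tau> i \<noteq> i \<longrightarrow> \<sigma> (\<tau> i) = - \<sigma> i" "\<forall>i<g. \<sigma> i = 1 \<or> \<sigma> i = -1"
  shows "sign \<tau> * (\<Prod>k<g. if \<tau> k = k then \<sigma> k else 1) = (\<Prod>k<g. (\<sigma> k :: int))"
  using assms
proof (induction "card {k. \<tau> k \<noteq> k}" arbitrary: \<tau> rule: less_induct)
  case less
  note perm = less.prems(1) and invo = less.prems(2) and sg = less.prems(3) and pm = less.prems(4)
  have sub: "{k. \<tau> k \<noteq> k} \<subseteq> {..<g}" using permutes_not_in[OF perm] by auto
  show ?case
  proof (cases "{k. \<tau> k \<noteq> k} = {}")
    case True
    hence "\<tau> = id" by auto
    thus ?thesis by simp
  next
    case False
    then obtain i where ti: "\<tau> i \<noteq> i" by auto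
    define j where "j = \<tau> i"
    have ig: "i < g" using sub ti by auto
    have jg: "j < g" using permutes_in_image[OF perm, of i] ig unfolding j_def by simp
    have ij: "i \<noteq> j" using ti j_def by auto
    have tj: "\<tau> j = i" using invo j_def by simp
    define \<tau>' where "\<tau>' = transpose i j \<circ> \<tau>"
    have t'i: "\<tau>' i = i" and t'j: "\<tau>' j = j" using tj by (auto simp: \<tau>'_def j_def)
    have t'k: "\<And>k. k \<noteq> i \<Longrightarrow> k \<noteq> j \<Longrightarrow> \<tau>' k = \<tau> k"
    proof -
      fix k assume k: "k \<noteq> i" "k \<noteq> j"
      have "\<tau> k \<noteq> i" using k(2) invo[rule_format, of k] unfolding j_def by force
      moreover have "\<tau> k \<noteq> j" using k(1) invo[rule_format, of k] tj unfolding j_def by force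
      ultimately show "\<tau>' k = \<tau> k" by (simp add: \<tau>'_def transpose_def)
    qed
    have perm': "\<tau>' permutes {..<g}"
      unfolding \<tau>'_def by (rule permutes_compose[OF perm permutes_swap_id]) (use ig jg in auto)
    have invo': "\<forall>k. \<tau>' (\<tau>' k) = k"
    proof
      fix k show "\<tau>' (\<tau>' k) = k"
      proof (cases "k = i \<or> k = j")
        case True thus ?thesis using t'i t'j by auto
      next
        case False
        hence k: "k \<noteq> i" "k \<noteq> j" by auto
        have "\<tau> k \<noteq> i" using k(2) invo[rule_format, of k] unfolding j_def by force
        moreover have "\<tau> k \<noteq> j" using k(1) invo[rule_format, of k] tj unfolding j_def by force
        ultimately show ?thesis using t'k[OF k] t'k[of "\<tau> k"] invo by simp
      qed
    qed
    have sg': "\<forall>k<g. \<tau>' k \<noteq> k \<longrightarrow> \<sigma> (\<tau>' k) = - \<sigma> k"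
    proof (intro allI impI)
      fix k assume kg: "k < g" and ne: "\<tau>' k \<noteq> k"
      hence k: "k \<noteq> i" "k \<noteq> j" using t'i t'j by auto
      show "\<sigma> (\<tau>' k) = - \<sigma> k" using sg kg ne unfolding t'k[OF k] by simp
    qed
    have set': "{k. \<tau>' k \<noteq> k} = {k. \<tau> k \<noteq> k} - {i, j}"
    proof -
      have "\<tau>' k \<noteq> k \<longleftrightarrow> \<tau> k \<noteq> k \<and> k \<notin> {i, j}" for k
      proof (cases "k = i \<or> k = j")
        case True thus ?thesis using t'i t'j by auto
      next
        case False thus ?thesis using t'k by auto
      qed
      thus ?thesis by auto
    qed
    have "card {k. \<tau>' k \<noteq> k} < card {k. \<tau> k \<noteq> k}"
      unfolding set' using sub ti by (intro psubset_card_mono) (use finite_subset[OF sub] in auto)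
    from less.hyps[OF this perm' invo' sg' pm]
    have IH: "sign \<tau>' * (\<Prod>k<g. if \<tau>' k = k then \<sigma> k else 1) = (\<Prod>k<g. \<sigma> k)" .
    have sgn': "sign \<tau>' = - sign \<tau>"
      unfolding \<tau>'_def
      using sign_compose[OF permutation_swap_id permutes_imp_permutation[OF finite_lessThan perm], of i j]
      by (simp add: sign_swap_id ij)
    define R where "R = {..<g} - {i, j}"
    have split: "{..<g} = insert i (insert j R)" "i \<notin> insert j R" "j \<notin> R" "finite R"
      using ig jg ij by (auto simp: R_def)
    have eqR: "(\<Prod>k\<in>R. if \<tau>' k = k then \<sigma> k else 1) = (\<Prod>k\<in>R. if \<tau> k = k then \<sigma> k else 1)"
      by (rule prod.cong) (auto simp: R_def t'k)
    have p1: "(\<Prod>k<g. if \<tau>' k = k then \<sigma> k else 1) = \<sigma> i * \<sigma> j * (\<Prod>k\<in>R. if \<tau> k = k then \<sigma> k else 1)"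
      unfolding split(1) using split(2-4) eqR t'i t'j by simp
    have p2: "(\<Prod>k<g. if \<tau> k = k then \<sigma> k else 1) = (\<Prod>k\<in>R. if \<tau> k = k then \<sigma> k else 1)"
      unfolding split(1) using split(2-4) ti tj ij j_def by simp
    have sij: "\<sigma> i * \<sigma> j = -1"
    proof -
      have "\<sigma> j = - \<sigma> i" using sg ig ti j_def by simp
      thus ?thesis using pm ig by auto
    qed
    show ?thesis using IH sgn' p1 p2 sij by (simp add: algebra_simps)
  qed
qed

theorem proposition5p1:
  fixes g :: nat and E :: "nat \<Rightarrow> nat \<Rightarrow> bool" and \<sigma> :: "nat \<Rightarrow> int" and w :: "nat \<Rightarrow> weight"
  assumes "alt_weighted_tree g E \<sigma> w"
  shows "effective g (Mat E \<sigma> w)"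
proof -
  have fo: "forest g E" and pm: "\<forall>i<g. \<sigma> i = 1 \<or> \<sigma> i = -1" and alt: "\<forall>i j. E i j \<longrightarrow> \<sigma> i = - \<sigma> j"
    using assms unfolding alt_weighted_tree_def by auto
  have sym: "\<And>i j. E i j \<Longrightarrow> E j i" using fo unfolding forest_def by blast
  have key: "det_term g (Mat E \<sigma> w) \<tau> = (\<Prod>k<g. \<sigma> k)"
    if perm: "\<tau> permutes {..<g}" and nz: "det_term g (Mat E \<sigma> w) \<tau> \<noteq> 0" for \<tau>
  proof -
    have nzk: "Mat E \<sigma> w k (\<tau> k) \<noteq> 0" if "k < g" for k
      using nz that unfolding det_term_def by (auto simp: prod_zero_iff)
    have ed: "\<forall>k<g. \<tau> k = k \<or> E k (\<tau> k)"
    proof (intro allI impI)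
      fix k assume "k < g"
      from nzk[OF this] show "\<tau> k = k \<or> E k (\<tau> k)"
        unfolding Mat_def using sym by (auto split: if_splits)
    qed
    have val: "Mat E \<sigma> w k (\<tau> k) = (if \<tau> k = k then \<sigma> k else 1)" if kg: "k < g" for k
      using nzk[OF kg] ed kg sym unfolding Mat_def by (cases "w k") (auto split: if_splits)
    have invo: "\<forall>i. \<tau> (\<tau> i) = i" using involution_lemma[OF perm fo ed] by blast
    have sg: "\<forall>i<g. \<tau> i \<noteq> i \<longrightarrow> \<sigma> (\<tau> i) = - \<sigma> i"
      using ed alt by auto
    have "det_term g (Mat E \<sigma> w) \<tau> = sign \<tau> * (\<Prod>k<g. if \<tau> k = k then \<sigma> k else 1)"
      unfolding det_term_def by (rule arg_cong[where f="\<lambda>x. sign \<tau> * x"], rule prod.cong) (simp_all add: val)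
    also have "\<dots> = (\<Prod>k<g. \<sigma> k)" using sign_prod_lemma[OF perm invo sg pm] .
    finally show ?thesis .
  qed
  show ?thesis unfolding effective_def
  proof (intro allI impI)
    fix \<tau> \<tau>' assume a: "\<tau> permutes {..<g}" and b: "\<tau>' permutes {..<g}"
      and c: "det_term g (Mat E \<sigma> w) \<tau> \<noteq> 0" and d: "det_term g (Mat E \<sigma> w) \<tau>' \<noteq> 0"
    show "sgn (det_term g (Mat E \<sigma> w) \<tau>) = sgn (det_term g (Mat E \<sigma> w) \<tau>')"
      by (simp only: key[OF a c] key[OF b d])
  qed
qed

end
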